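(* Let $H$ be a real Hilbert space, $C\subseteq H$ nonempty, closed and convex, and $F:H\to H$ an operator such that (A1) $S_D\neq\emptyset$; (A2) $F$ is quasimonotone; (A3) $F$ is uniformly continuous on $H$; (A4) whenever $\{x_n\}\subset H$ and $x_n\rightharpoonup x$, one has $\|F(x)\|\le\liminf_{n\to\infty}\|F(x_n)\|$. Let $\{z_n\}$ be the sequence generated by Algorithm 3.1 (with $\epsilon=0$), and assume $z_n\neq w_n$ for all $n$. Then there exists a weak cluster point $u^*$ of $\{z_n\}$ such that $u^*\in S_D$ or $F(u^* )=0$.
   Context: $\rightharpoonup$ denotes weak convergence. $P_C$ denotes the metric projection onto $C$. $S_D$ is the set of $z\in C$ with $\langle F(v),v-z\rangle\ge0$ for all $v\in C$. $F$ is quasimonotone if $\langle F(w),z-w\rangle>0$ implies $\langle F(z),z-w\rangle\ge0$ for all $w,z\in H$. Algorithm 3.1 (with $\epsilon=0$): fix $\mu\in(0,1)$, a sequence $\{\xi_n\}\subset[0,\infty)$ with $\sum_{n}\xi_n<\infty$, $z_1\in H$ and $\lambda_1>0$. For $n=1,2,\dots$: $w_n=P_C(z_n-\lambda_nF(z_n))$; $z_{n+1}=w_n+\lambda_n(F(z_n)-F(w_n))$; $\lambda_{n+1}=\min\{\frac{\mu\|z_n-w_n\|}{\|F(z_n)-F(w_n)\|},\lambda_n+\xi_n\}$ if $F(z_n)\neq F(w_n)$, and $\lambda_{n+1}=\lambda_n+\xi_n$ otherwise. *)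

theory Defs
  imports "HOL-Analysis.Analysis"
begin

definition weak_conv :: "(nat \<Rightarrow> 'a::real_inner) \<Rightarrow> 'a \<Rightarrow> bool" where
  "weak_conv x u \<longleftrightarrow> (\<forall>y. ((\<lambda>n. inner (x n) y) \<longlongrightarrow> inner u y) sequentially)"

definition weak_cluster_point :: "(nat \<Rightarrow> 'a::real_inner) \<Rightarrow> 'a \<Rightarrow> bool" where
  "weak_cluster_point x u \<longleftrightarrow> (\<exists>r. strict_mono r \<and> weak_conv (x \<circ> r) u)"

definition S_D :: "'a::real_inner set \<Rightarrow> ('a \<Rightarrow> 'a) \<Rightarrow> 'a set" where
  "S_D C F = {z \<in> C. \<forall>v\<in>C. inner (F v) (v - z) \<ge> 0}"

definition quasimonotone :: "('a::real_inner \<Rightarrow> 'a) \<Rightarrow> bool" where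
  "quasimonotone F \<longleftrightarrow> (\<forall>w z. inner (F w) (z - w) > 0 \<longrightarrow> inner (F z) (z - w) \<ge> 0)"

text \<open>Metric projection onto C (well defined and unique for C nonempty closed convex in a Hilbert space).\<close>
definition metric_proj :: "'a::real_inner set \<Rightarrow> 'a \<Rightarrow> 'a" where
  "metric_proj C x = (SOME p. p \<in> C \<and> (\<forall>y\<in>C. dist x p \<le> dist x y))"

end

theory Submission
  imports Defs "HOL-Library.Diagonal_Subsequence"
begin

lemma para_law: fixes a b :: "'a::real_inner"
  shows "norm (b - a)^2 + norm (a + b)^2 = 2 * norm a ^2 + 2 * norm b ^2"
  by (simp add: power2_norm_eq_inner inner_simps algebra_simps)

lemma lin_aux: "(A::real) = 2*a + 2*b - c \<Longrightarrow> 4*d2 \<le> c \<Longrightarrow> a \<le> P \<Longrightarrow> b \<le> Q \<Longrightarrow> A \<le> 2*(P - d2) + 2*(Q - d2)"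
  by simp

lemma lin_aux2: "(N::real) \<le> 2*X + 2*Y \<Longrightarrow> \<bar>X\<bar> < E/4 \<Longrightarrow> \<bar>Y\<bar> < E/4 \<Longrightarrow> N < E"
  by linarith

lemma inv_lim: "(\<lambda>k. 1/(real k + 1)) \<longlonglongrightarrow> 0"
  using LIMSEQ_inverse_real_of_nat by (simp add: inverse_eq_divide add.commute)

lemma proj_exists:
  fixes C :: "'a::{real_inner,complete_space} set"
  assumes ne: "C \<noteq> {}" and cl: "closed C" and cv: "convex C"
  shows "\<exists>p\<in>C. \<forall>y\<in>C. dist x p \<le> dist x y"
proof -
  define d where "d = infdist x C"
  have d0: "d \<ge> 0" unfolding d_def by (rule infdist_nonneg)
  have dle: "\<And>y. y \<in> C \<Longrightarrow> d \<le> dist x y" unfolding d_def by (rule infdist_le)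
  have "\<forall>k::nat. \<exists>c\<in>C. dist x c < d + 1/(real k + 1)"
  proof
    fix k :: nat
    have "infdist x C < d + 1/(real k + 1)" unfolding d_def by (simp add: add_pos_pos)
    then show "\<exists>c\<in>C. dist x c < d + 1/(real k + 1)"
      unfolding infdist_notempty[OF ne] using cInf_lessD[of "dist x ` C"] ne by blast
  qed
  then obtain c where cC: "\<And>k. c k \<in> C" and cd: "\<And>k. dist x (c k) < d + 1/(real k + 1)"
    by metis
  have key: "norm (c j - c k)^2 \<le> 2*((d + 1/(real j + 1))^2 - d^2) + 2*((d + 1/(real k + 1))^2 - d^2)" for j k
  proof -
    let ?a = "x - c j" and ?b = "x - c k"
    have mC: "(1/2) *\<^sub>R c j + (1/2) *\<^sub>R c k \<in> C"
      using cv cC unfolding convex_def by auto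
    hence "d \<le> dist x ((1/2) *\<^sub>R c j + (1/2) *\<^sub>R c k)" by (rule dle)
    also have "x - ((1/2) *\<^sub>R c j + (1/2) *\<^sub>R c k) = (1/2) *\<^sub>R (?a + ?b)"
      by (simp add: algebra_simps) (metis scaleR_half_double scaleR_add_right)
    hence "dist x ((1/2) *\<^sub>R c j + (1/2) *\<^sub>R c k) = norm (?a + ?b) / 2"
      by (simp add: dist_norm)
    finally have "2 * d \<le> norm (?a + ?b)" by simp
    hence "(2 * d)^2 \<le> norm (?a + ?b)^2" using d0 by (intro power_mono) auto
    hence h1: "4 * d^2 \<le> norm (?a + ?b)^2" by (simp add: power_mult_distrib)
    have h2: "norm ?a < d + 1/(real j + 1)" "norm ?b < d + 1/(real k + 1)" using cd by (auto simp: dist_norm)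
    have h3: "norm ?a ^2 \<le> (d + 1/(real j + 1))^2" "norm ?b ^2 \<le> (d + 1/(real k + 1))^2"
      using h2 by (auto intro!: power_mono)
    have "c j - c k = ?b - ?a" by simp
    then have "norm (c j - c k)^2 = 2 * norm ?a ^2 + 2 * norm ?b ^2 - norm (?a + ?b)^2"
      by (simp add: power2_norm_eq_inner inner_simps algebra_simps)
    then show ?thesis using lin_aux[OF _ h1 h3] by blast
  qed
  have "Cauchy c"
  proof (rule metric_CauchyI)
    fix e :: real assume e: "e > 0"
    have "((\<lambda>k. (d + 1/(real k + 1))^2 - d^2) \<longlongrightarrow> (d + 0)^2 - d^2) sequentially"
      by (intro tendsto_intros inv_lim)
    hence "((\<lambda>k. (d + 1/(real k + 1))^2 - d^2) \<longlongrightarrow> 0) sequentially" by simp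
    then obtain M where M: "\<And>k. k \<ge> M \<Longrightarrow> \<bar>(d + 1/(real k + 1))^2 - d^2\<bar> < e^2/4"
      using e unfolding LIMSEQ_def dist_real_def by (metis diff_zero zero_less_divide_iff zero_less_numeral zero_less_power)
    show "\<exists>M. \<forall>m\<ge>M. \<forall>n\<ge>M. dist (c m) (c n) < e"
    proof (intro exI allI impI)
      fix m n assume "m \<ge> M" "n \<ge> M"
      then have "norm (c m - c n)^2 < e^2" using lin_aux2[OF key[of m n] M[of m] M[of n]] by blast
      then show "dist (c m) (c n) < e" using e by (simp add: dist_norm power_less_imp_less_base)
    qed
  qed
  then obtain p where cp: "c \<longlonglongrightarrow> p" using Cauchy_convergent_iff convergent_def by blast
  have pC: "p \<in> C" using cl cp cC closed_sequentially by blast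
  have "(\<lambda>k. dist x (c k)) \<longlonglongrightarrow> dist x p" by (intro tendsto_intros cp)
  moreover have "(\<lambda>k. d + 1/(real k + 1)) \<longlonglongrightarrow> d + 0"
    by (intro tendsto_intros inv_lim)
  ultimately have "dist x p \<le> d + 0"
    using cd by (intro LIMSEQ_le[of "\<lambda>k. dist x (c k)" _ "\<lambda>k. d + 1/(real k + 1)"]) (auto intro: less_imp_le)
  then show ?thesis using pC dle by force
qed

lemma proj_min:
  fixes C :: "'a::{real_inner,complete_space} set"
  assumes ne: "C \<noteq> {}" and cl: "closed C" and cv: "convex C"
  shows "metric_proj C x \<in> C \<and> (\<forall>y\<in>C. dist x (metric_proj C x) \<le> dist x y)"
proof -
  obtain p where "p \<in> C \<and> (\<forall>y\<in>C. dist x p \<le> dist x y)" using proj_exists[OF ne cl cv, of x] by blast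
  then show ?thesis unfolding metric_proj_def by (rule someI[where P="\<lambda>p. p \<in> C \<and> (\<forall>y\<in>C. dist x p \<le> dist x y)"])
qed

lemma var_ineq_from_min:
  fixes p x y :: "'a::real_inner"
  assumes h: "\<And>t. 0 < t \<Longrightarrow> t \<le> 1 \<Longrightarrow> norm (x - p) \<le> norm (x - (p + t *\<^sub>R (y - p)))"
  shows "inner (x - p) (y - p) \<le> 0"
proof (rule ccontr)
  assume "\<not> ?thesis"
  hence a: "inner (x - p) (y - p) > 0" by simp
  define a where "a = inner (x - p) (y - p)"
  define n where "n = norm (y - p)^2"
  define t where "t = min 1 (a / (n + 1))"
  have n0: "n \<ge> 0" unfolding n_def by simp
  have t0: "t > 0" unfolding t_def using a n0 a_def by auto
  have t1: "t \<le> 1" unfolding t_def by simp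
  have "norm (x - p)^2 \<le> norm (x - (p + t *\<^sub>R (y - p)))^2"
    using h[OF t0 t1] by (simp add: power_mono)
  also have "norm (x - (p + t *\<^sub>R (y - p)))^2 = norm (x - p)^2 - 2 * t * a + t^2 * n"
    unfolding a_def n_def power2_norm_eq_inner
    by (simp add: inner_simps algebra_simps power2_eq_square inner_commute)
  finally have "2 * t * a \<le> t^2 * n" by simp
  hence "2 * a \<le> t * n" using t0 by (simp add: power2_eq_square)
  moreover have "t * n \<le> a / (n + 1) * n" unfolding t_def using n0 by (intro mult_right_mono) auto
  moreover have "a / (n + 1) * n < a" using a a_def n0 by (simp add: field_simps)
  ultimately show False using a a_def by linarith
qed

lemma proj_char:
  fixes C :: "'a::{real_inner,complete_space} set"
  assumes ne: "C \<noteq> {}" and cl: "closed C" and cv: "convex C"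
  shows "metric_proj C x \<in> C" "\<And>y. y \<in> C \<Longrightarrow> inner (x - metric_proj C x) (y - metric_proj C x) \<le> 0"
proof -
  let ?p = "metric_proj C x"
  show pC: "?p \<in> C" using proj_min[OF assms] by blast
  fix y assume yC: "y \<in> C"
  show "inner (x - ?p) (y - ?p) \<le> 0"
  proof (rule var_ineq_from_min)
    fix t :: real assume "0 < t" "t \<le> 1"
    have "?p + t *\<^sub>R (y - ?p) = (1 - t) *\<^sub>R ?p + t *\<^sub>R y" by (simp add: algebra_simps)
    also have "\<dots> \<in> C" using cv pC yC \<open>0 < t\<close> \<open>t \<le> 1\<close> unfolding convex_def by auto
    finally show "norm (x - ?p) \<le> norm (x - (?p + t *\<^sub>R (y - ?p)))"
      using proj_min[OF assms, of x] by (simp add: dist_norm)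
  qed
qed

lemma proj_nonexp_pt:
  fixes C :: "'a::{real_inner,complete_space} set"
  assumes ne: "C \<noteq> {}" and cl: "closed C" and cv: "convex C" and pC: "p \<in> C"
  shows "norm (metric_proj C y - p) \<le> norm (y - p)"
proof -
  let ?w = "metric_proj C y"
  have i: "inner (y - ?w) (p - ?w) \<le> 0" using proj_char(2)[OF ne cl cv pC] .
  have "norm (?w - p)^2 = inner (?w - y) (?w - p) + inner (y - p) (?w - p)"
    by (simp add: power2_norm_eq_inner inner_simps algebra_simps)
  also have "inner (?w - y) (?w - p) = inner (y - ?w) (p - ?w)" by (simp add: inner_simps algebra_simps)
  finally have "norm (?w - p)^2 \<le> inner (y - p) (?w - p)" using i by linarith
  also have "\<dots> \<le> norm (y - p) * norm (?w - p)" by (rule real_inner_class.Cauchy_Schwarz_ineq2[THEN order_trans[OF abs_ge_self]])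
  finally have "norm (?w - p) * norm (?w - p) \<le> norm (y - p) * norm (?w - p)" by (simp add: power2_eq_square)
  thus ?thesis by (cases "norm (?w - p) = 0") (auto simp: mult_le_cancel_right)
qed

lemma diag_inner:
  fixes x :: "nat \<Rightarrow> 'a::real_inner"
  assumes bnd: "\<And>n. norm (x n) \<le> B"
  shows "\<exists>r. strict_mono r \<and> (\<forall>m. convergent (\<lambda>n. inner (x (r n)) (x m)))"
proof -
  define P where "P = (\<lambda>m (s::nat\<Rightarrow>nat). convergent (\<lambda>n. inner (x (s n)) (x m)))"
  interpret S: subseqs P
  proof
    fix m and s :: "nat \<Rightarrow> nat" assume "strict_mono s"
    have "bounded (range (\<lambda>n. inner (x (s n)) (x m)))"
    proof (rule boundedI)
      fix y assume "y \<in> range (\<lambda>n. inner (x (s n)) (x m))"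
      then obtain n where y: "y = inner (x (s n)) (x m)" by auto
      have "norm y \<le> norm (x (s n)) * norm (x m)" unfolding y real_norm_def by (rule Cauchy_Schwarz_ineq2)
      also have "\<dots> \<le> B * B" using bnd by (intro mult_mono) (auto intro: order_trans[OF norm_ge_zero])
      finally show "norm y \<le> B * B" .
    qed
    then obtain l r where "strict_mono r" "((\<lambda>n. inner (x (s n)) (x m)) \<circ> r) \<longlonglongrightarrow> l"
      using bounded_imp_convergent_subsequence by blast
    then show "\<exists>r'. strict_mono r' \<and> P m (s \<circ> r')"
      unfolding P_def convergent_def by (auto simp: o_def)
  qed
  have stab: "\<And>r s n. strict_mono r \<Longrightarrow> P n s \<Longrightarrow> P n (s \<circ> r)"
    unfolding P_def convergent_def using LIMSEQ_subseq_LIMSEQ by (fastforce simp: o_def)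
  have "\<forall>m. convergent (\<lambda>n. inner (x (S.diagseq n)) (x m))"
  proof
    fix m
    have "P m (S.diagseq \<circ> (+) (Suc m))" by (rule S.diagseq_holds[OF stab])
    then obtain l where "(\<lambda>n. inner (x (S.diagseq (n + Suc m))) (x m)) \<longlonglongrightarrow> l"
      unfolding P_def convergent_def by (auto simp: o_def add.commute)
    then show "convergent (\<lambda>n. inner (x (S.diagseq n)) (x m))"
      unfolding convergent_def by (blast intro: LIMSEQ_offset)
  qed
  then show ?thesis using S.subseq_diagseq by blast
qed

lemma proj_orth:
  fixes M :: "'a::{real_inner,complete_space} set"
  assumes ne: "M \<noteq> {}" and cl: "closed M" and cv: "convex M"
    and h1: "metric_proj M y + s \<in> M" and h2: "metric_proj M y - s \<in> M"
  shows "inner (y - metric_proj M y) s = 0"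
proof -
  have "inner (y - metric_proj M y) (metric_proj M y + s - metric_proj M y) \<le> 0"
    by (rule proj_char(2)[OF ne cl cv h1])
  moreover have "inner (y - metric_proj M y) (metric_proj M y - s - metric_proj M y) \<le> 0"
    by (rule proj_char(2)[OF ne cl cv h2])
  ultimately show ?thesis by (simp add: inner_simps)
qed

lemma closure_subspace_add:
  fixes S :: "'a::real_normed_vector set"
  assumes "subspace S" "p \<in> closure S" "s \<in> S"
  shows "p + s \<in> closure S"
proof -
  have "\<forall>e>0. \<exists>t\<in>S. dist t (p + s) < e"
  proof (intro allI impI)
    fix e :: real assume "e > 0"
    then obtain t where "t \<in> S" "dist t p < e" using assms(2) closure_approachable by blast
    then show "\<exists>t\<in>S. dist t (p + s) < e"
      using assms by (intro bexI[of _ "t + s"]) (auto simp: dist_norm subspace_add)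
  qed
  then show ?thesis using closure_approachable by blast
qed

lemma riesz_aux:
  fixes L :: "'a::{real_inner,complete_space} \<Rightarrow> real"
  assumes bl: "bounded_linear L"
  shows "\<exists>u. \<forall>y. L y = inner u y"
proof (cases "\<forall>y. L y = 0")
  case True then show ?thesis by (intro exI[of _ 0]) simp
next
  case False
  then obtain y0 where y0: "L y0 \<noteq> 0" by blast
  interpret L: bounded_linear L by (rule bl)
  define N where "N = {y. L y = 0}"
  have N_eq: "N = L -` {0}" unfolding N_def by auto
  have clN: "closed N" unfolding N_eq
    by (rule continuous_closed_vimage) (auto intro: linear_continuous_at[OF bl])
  have subN: "subspace N" unfolding N_def subspace_def by (auto simp: L.add L.scaleR L.zero)
  have cvN: "convex N" by (rule subspace_imp_convex[OF subN])
  have neN: "N \<noteq> {}" using subN subspace_0 by blast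
  define q where "q = metric_proj N y0"
  have qN: "q \<in> N" unfolding q_def by (rule proj_char(1)[OF neN clN cvN])
  define e where "e = y0 - q"
  have Le: "L e = L y0" using qN unfolding e_def N_def by (simp add: L.diff)
  have orth: "inner e n = 0" if "n \<in> N" for n
    unfolding e_def q_def
    by (rule proj_orth[OF neN clN cvN]) (use qN that subN in \<open>auto simp: q_def subspace_add subspace_diff\<close>)
  have e0: "e \<noteq> 0" using Le y0 L.zero by auto
  hence ee: "inner e e \<noteq> 0" by simp
  define u where "u = (L e / inner e e) *\<^sub>R e"
  have "L y = inner u y" for y
  proof -
    have "y - (L y / L e) *\<^sub>R e \<in> N" unfolding N_def using Le y0 by (simp add: L.diff L.scaleR)
    hence "inner e (y - (L y / L e) *\<^sub>R e) = 0" by (rule orth)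
    hence "inner e y = (L y / L e) * inner e e" by (simp add: inner_simps)
    thus ?thesis unfolding u_def using ee Le y0 by (simp add: field_simps)
  qed
  thus ?thesis by blast
qed

lemma weak_seq_compact:
  fixes x :: "nat \<Rightarrow> 'a::{real_inner,complete_space}"
  assumes bnd0: "\<And>n. norm (x n) \<le> B0"
  shows "\<exists>r u. strict_mono r \<and> weak_conv (x \<circ> r) u"
proof -
  define B where "B = B0 + 1"
  have B0: "B > 0" unfolding B_def using bnd0[of 0] norm_ge_zero[of "x 0"] by linarith
  have bnd: "norm (x n) \<le> B" for n using bnd0[of n] unfolding B_def by linarith
  obtain r where r: "strict_mono r" and rc: "\<And>m. convergent (\<lambda>n. inner (x (r n)) (x m))"
    using diag_inner[of x B] bnd by blast
  define G where "G = {y. convergent (\<lambda>n. inner (x (r n)) y)}"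
  have subG: "subspace G" unfolding G_def subspace_def
  proof (intro conjI ballI allI)
    show "0 \<in> {y. convergent (\<lambda>n. inner (x (r n)) y)}" by (simp add: convergent_const)
  next
    fix a b assume "a \<in> {y. convergent (\<lambda>n. inner (x (r n)) y)}" "b \<in> {y. convergent (\<lambda>n. inner (x (r n)) y)}"
    then show "a + b \<in> {y. convergent (\<lambda>n. inner (x (r n)) y)}"
      by (auto simp: inner_add_right intro: convergent_add)
  next
    fix c :: real and a assume "a \<in> {y. convergent (\<lambda>n. inner (x (r n)) y)}"
    then obtain l where "(\<lambda>n. inner (x (r n)) a) \<longlonglongrightarrow> l" unfolding convergent_def by auto
    then have "(\<lambda>n. c * inner (x (r n)) a) \<longlonglongrightarrow> c * l" by (intro tendsto_intros)
    then show "c *\<^sub>R a \<in> {y. convergent (\<lambda>n. inner (x (r n)) y)}"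
      unfolding convergent_def by auto
  qed
  have clG: "closed G"
  proof -
    have "closure G \<subseteq> G"
    proof
      fix y assume y: "y \<in> closure G"
      have "Cauchy (\<lambda>n. inner (x (r n)) y)"
      proof (rule metric_CauchyI)
        fix e :: real assume e: "e > 0"
        then obtain g where gG: "g \<in> G" and gy: "dist g y < e / (3 * B)"
          using y closure_approachable[of y G] B0 by (metis divide_pos_pos mult_pos_pos zero_less_numeral)
        have "Cauchy (\<lambda>n. inner (x (r n)) g)" using gG unfolding G_def by (simp add: convergent_Cauchy)
        then obtain M where M: "\<And>m n. m \<ge> M \<Longrightarrow> n \<ge> M \<Longrightarrow> dist (inner (x (r m)) g) (inner (x (r n)) g) < e / 3"
          using e unfolding Cauchy_def by (meson divide_pos_pos zero_less_numeral)
        have bd: "\<bar>inner (x k) (y - g)\<bar> \<le> B * (e / (3 * B))" for k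
        proof -
          have "\<bar>inner (x k) (y - g)\<bar> \<le> norm (x k) * norm (y - g)" by (rule Cauchy_Schwarz_ineq2)
          also have "\<dots> \<le> B * (e / (3 * B))"
            using gy bnd[of k] B0 by (intro mult_mono) (auto simp: dist_norm norm_minus_commute)
          finally show ?thesis .
        qed
        have eq: "B * (e / (3 * B)) = e / 3" using B0 by simp
        show "\<exists>M. \<forall>m\<ge>M. \<forall>n\<ge>M. dist (inner (x (r m)) y) (inner (x (r n)) y) < e"
        proof (intro exI allI impI)
          fix m n assume mn: "m \<ge> M" "n \<ge> M"
          have "inner (x (r m)) y - inner (x (r n)) y
              = inner (x (r m)) (y - g) + (inner (x (r m)) g - inner (x (r n)) g) - inner (x (r n)) (y - g)"
            by (simp add: inner_simps)
          then show "dist (inner (x (r m)) y) (inner (x (r n)) y) < e"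
            using M[OF mn] bd[of "r m"] bd[of "r n"] unfolding dist_real_def eq by linarith
        qed
      qed
      then show "y \<in> G" unfolding G_def by (simp add: Cauchy_convergent_iff)
    qed
    then show ?thesis by (simp add: closure_subset_eq)
  qed
  define M where "M = closure (span (range x))"
  have MG: "M \<subseteq> G" unfolding M_def
    by (intro closure_minimal span_minimal subG clG) (auto simp: G_def rc)
  have clM: "closed M" unfolding M_def by simp
  have cvM: "convex M" unfolding M_def by (intro convex_closure subspace_imp_convex subspace_span)
  have neM: "M \<noteq> {}" unfolding M_def using span_zero closure_subset by blast
  have allG: "y \<in> G" for y
  proof -
    define p where "p = metric_proj M y"
    have pM: "p \<in> M" unfolding p_def by (rule proj_char(1)[OF neM clM cvM])
    have "inner (y - p) (x m) = 0" for m
      unfolding p_def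
    proof (rule proj_orth[OF neM clM cvM])
      show "metric_proj M y + x m \<in> M" using pM unfolding p_def M_def
        by (intro closure_subspace_add) (auto intro: span_base)
      have "metric_proj M y + - x m \<in> M" using pM unfolding p_def M_def
        by (intro closure_subspace_add) (auto intro: span_base span_neg)
      then show "metric_proj M y - x m \<in> M" by simp
    qed
    hence "(\<lambda>n. inner (x (r n)) (y - p)) = (\<lambda>n. 0)" by (metis inner_commute)
    hence "y - p \<in> G" unfolding G_def by (simp add: convergent_const)
    moreover have "p \<in> G" using pM MG by blast
    ultimately have "p + (y - p) \<in> G" using subG subspace_add by blast
    thus ?thesis by simp
  qed
  define L where "L y = lim (\<lambda>n. inner (x (r n)) y)" for y
  have Lt: "(\<lambda>n. inner (x (r n)) y) \<longlonglongrightarrow> L y" for y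
    using allG[of y] unfolding G_def L_def by (simp add: convergent_LIMSEQ_iff)
  have Ladd: "L (a + b) = L a + L b" for a b
    using Lt[of "a + b"] tendsto_add[OF Lt[of a] Lt[of b]] by (simp add: inner_add_right LIMSEQ_unique)
  have Lsc: "L (c *\<^sub>R a) = c *\<^sub>R L a" for c a
    using Lt[of "c *\<^sub>R a"] tendsto_mult[OF tendsto_const[of c] Lt[of a]] by (simp add: LIMSEQ_unique)
  have Lb: "norm (L y) \<le> norm y * B" for y
  proof -
    have "(\<lambda>n. \<bar>inner (x (r n)) y\<bar>) \<longlonglongrightarrow> \<bar>L y\<bar>" by (intro tendsto_intros Lt)
    moreover have "\<bar>inner (x (r n)) y\<bar> \<le> norm y * B" for n
    proof -
      have "\<bar>inner (x (r n)) y\<bar> \<le> norm (x (r n)) * norm y" by (rule Cauchy_Schwarz_ineq2)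
      also have "\<dots> \<le> norm y * B" using bnd[of "r n"] mult_left_mono[of "norm (x (r n))" B "norm y"] by (simp add: mult.commute)
      finally show ?thesis .
    qed
    ultimately show ?thesis by (auto intro: LIMSEQ_le_const2)
  qed
  have "bounded_linear L" by (rule bounded_linear_intro[OF Ladd Lsc Lb])
  then obtain u where u: "\<And>y. L y = inner u y" using riesz_aux by blast
  have "weak_conv (x \<circ> r) u" unfolding weak_conv_def using Lt u by (simp add: o_def)
  then show ?thesis using r by blast
qed

lemma uc_linear_growth:
  fixes F :: "'a::real_normed_vector \<Rightarrow> 'b::real_normed_vector"
  assumes uc: "uniformly_continuous_on UNIV F"
  shows "\<exists>B. 0 \<le> B \<and> (\<forall>x y. norm (F x - F y) \<le> 1 + B * norm (x - y))"
proof -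
  obtain \<delta> where d0: "\<delta> > 0" and dh: "\<And>x x'. dist x' x < \<delta> \<Longrightarrow> dist (F x') (F x) < 1"
    using uc unfolding uniformly_continuous_on_def by (metis UNIV_I zero_less_one)
  have ind: "\<forall>x y. norm (x - y) < (real n + 1) * (\<delta>/2) \<longrightarrow> norm (F x - F y) \<le> real n + 1" for n
  proof (induction n)
    case 0
    show ?case
    proof (intro allI impI)
      fix x y :: 'a assume "norm (x - y) < (real 0 + 1) * (\<delta>/2)"
      hence "dist x y < \<delta>" using d0 by (simp add: dist_norm)
      hence "dist (F x) (F y) < 1" by (rule dh)
      thus "norm (F x - F y) \<le> real 0 + 1" by (simp add: dist_norm)
    qed
  next
    case (Suc n)
    show ?case
    proof (intro allI impI)
      fix x y :: 'a assume xy: "norm (x - y) < (real (Suc n) + 1) * (\<delta>/2)"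
      show "norm (F x - F y) \<le> real (Suc n) + 1"
      proof (cases "norm (x - y) < \<delta>/2")
        case True
        hence "dist x y < \<delta>" using d0 by (simp add: dist_norm)
        hence "dist (F x) (F y) < 1" by (rule dh)
        thus ?thesis by (simp add: dist_norm)
      next
        case False
        define nn where "nn = norm (x - y)"
        have nnp: "nn > 0" using False d0 unfolding nn_def by linarith
        define t where "t = (\<delta>/2) / nn"
        have t0: "0 < t" "t \<le> 1" using False d0 nnp unfolding t_def nn_def by auto
        define m where "m = x + t *\<^sub>R (y - x)"
        have "x - m = - (t *\<^sub>R (y - x))" unfolding m_def by simp
        hence "norm (x - m) = t * nn" using t0 unfolding nn_def by (simp add: norm_minus_commute)
        hence xm: "norm (x - m) = \<delta>/2" unfolding t_def using nnp by simp
        have "m - y = (1 - t) *\<^sub>R (x - y)" unfolding m_def by (simp add: algebra_simps)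
        hence "norm (m - y) = (1 - t) * nn" using t0 unfolding nn_def by simp
        also have "\<dots> = nn - \<delta>/2" unfolding t_def using nnp by (simp add: algebra_simps)
        finally have "norm (m - y) < (real n + 1) * (\<delta>/2)" using xy unfolding nn_def by (simp add: algebra_simps)
        hence h1: "norm (F m - F y) \<le> real n + 1" using Suc.IH by blast
        have "dist x m < \<delta>" using xm d0 by (simp add: dist_norm)
        hence "dist (F x) (F m) < 1" by (rule dh)
        hence h2: "norm (F x - F m) < 1" by (simp add: dist_norm)
        have "norm (F x - F y) \<le> norm (F x - F m) + norm (F m - F y)" using norm_triangle_ineq[of "F x - F m" "F m - F y"] by simp
        thus ?thesis using h1 h2 by simp
      qed
    qed
  qed
  have "norm (F x - F y) \<le> 1 + (2/\<delta>) * norm (x - y)" for x y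
  proof -
    define n where "n = nat \<lfloor>2 * norm (x - y) / \<delta>\<rfloor>"
    have q0: "0 \<le> 2 * norm (x - y) / \<delta>" using d0 by simp
    have n1: "real n \<le> 2 * norm (x - y) / \<delta>" unfolding n_def using q0 by linarith
    have n2: "2 * norm (x - y) / \<delta> < real n + 1" unfolding n_def using q0 by linarith
    have "norm (x - y) < (real n + 1) * (\<delta>/2)" using n2 d0 by (simp add: field_simps)
    hence "norm (F x - F y) \<le> real n + 1" using ind by blast
    also have "\<dots> \<le> 1 + (2/\<delta>) * norm (x - y)" using n1 by simp
    finally show ?thesis .
  qed
  thus ?thesis using d0 by (intro exI[of _ "2/\<delta>"]) auto
qed

locale algo =
  fixes C :: "'a::{real_inner,complete_space} set"
    and F :: "'a \<Rightarrow> 'a"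
    and z w :: "nat \<Rightarrow> 'a"
    and lam xi :: "nat \<Rightarrow> real"
    and mu :: real
  assumes C_ne: "C \<noteq> {}" and C_closed: "closed C" and C_convex: "convex C"
    and A1: "S_D C F \<noteq> {}"
    and A2: "quasimonotone F"
    and A3: "uniformly_continuous_on UNIV F"
    and A4: "\<And>xs x. weak_conv xs x \<Longrightarrow>
               ereal (norm (F x)) \<le> Liminf sequentially (\<lambda>n. ereal (norm (F (xs n))))"
    and mu: "0 < mu" "mu < 1"
    and xi_nonneg: "\<And>n. xi n \<ge> 0" and xi_sum: "summable xi"
    and lam0: "lam 0 > 0"
    and w_def: "\<And>n. w n = metric_proj C (z n - lam n *\<^sub>R F (z n))"
    and z_step: "\<And>n. z (Suc n) = w n + lam n *\<^sub>R (F (z n) - F (w n))"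
    and lam_step: "\<And>n. lam (Suc n) =
          (if F (z n) \<noteq> F (w n)
           then min (mu * norm (z n - w n) / norm (F (z n) - F (w n))) (lam n + xi n)
           else lam n + xi n)"
    and z_ne_w: "\<And>n. z n \<noteq> w n"
begin

definition d where "d n = norm (z n - w n)"
definition DF where "DF n = norm (F (z n) - F (w n))"
definition X where "X = suminf xi"
definition Lam where "Lam = lam 0 + X"
definition th where "th = (1 + mu) / 2"

lemma d_pos: "d n > 0" unfolding d_def using z_ne_w[of n] by simp

lemma lam_pos: "lam n > 0"
proof (induction n)
  case 0 then show ?case using lam0 .
next
  case (Suc n)
  show ?case
  proof (cases "F (z n) \<noteq> F (w n)")
    case True
    have "mu * norm (z n - w n) / norm (F (z n) - F (w n)) > 0"
      using True mu z_ne_w[of n] by (simp add: divide_pos_pos)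
    moreover have "lam n + xi n > 0" using Suc.IH xi_nonneg[of n] by linarith
    ultimately show ?thesis using True by (simp add: lam_step)
  next
    case False
    then show ?thesis using Suc.IH xi_nonneg[of n] lam_step[of n] by simp
  qed
qed

lemma lam_le_step: "lam (Suc n) \<le> lam n + xi n"
  using lam_step[of n] by (cases "F (z n) \<noteq> F (w n)") auto

lemma lam_DF: "lam (Suc n) * DF n \<le> mu * d n"
proof (cases "F (z n) \<noteq> F (w n)")
  case True
  hence D0: "DF n > 0" unfolding DF_def by simp
  have "lam (Suc n) \<le> mu * d n / DF n" using True lam_step[of n] unfolding d_def DF_def by simp
  thus ?thesis using D0 by (simp add: field_simps)
next
  case False
  thus ?thesis unfolding DF_def using mu d_pos[of n] by simp
qed

lemma lam_dec: assumes "lam (Suc n) < lam n" shows "DF n > 0" "lam (Suc n) * DF n = mu * d n"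
proof -
  have ne: "F (z n) \<noteq> F (w n)" using assms lam_step[of n] xi_nonneg[of n] by (auto split: if_splits)
  thus D0: "DF n > 0" unfolding DF_def by simp
  have "lam (Suc n) = min (mu * d n / DF n) (lam n + xi n)" using ne lam_step[of n] unfolding d_def DF_def by simp
  hence "lam (Suc n) = mu * d n / DF n" using assms xi_nonneg[of n] by (auto simp: min_def split: if_splits)
  thus "lam (Suc n) * DF n = mu * d n" using D0 by simp
qed

lemma X_ge: "(\<Sum>j<n. xi j) \<le> X"
  unfolding X_def using xi_sum xi_nonneg by (intro sum_le_suminf) auto

lemma X_nonneg: "X \<ge> 0"
  unfolding X_def using xi_sum xi_nonneg by (intro suminf_nonneg) auto

lemma lam_le_sum: "lam n \<le> lam 0 + (\<Sum>j<n. xi j)"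
proof (induction n)
  case (Suc n) thus ?case using lam_le_step[of n] by simp
qed simp

lemma lam_le_Lam: "lam n \<le> Lam"
  using lam_le_sum[of n] X_ge[of n] unfolding Lam_def by linarith

lemma Lam_pos: "Lam > 0" using lam0 X_nonneg unfolding Lam_def by linarith

lemma th: "mu < th" "th < 1" "0 < th" unfolding th_def using mu by auto

lemma wC: "w n \<in> C" unfolding w_def by (rule proj_char(1)[OF C_ne C_closed C_convex])

lemma w_ineq: "v \<in> C \<Longrightarrow> inner (z n - lam n *\<^sub>R F (z n) - w n) (v - w n) \<le> 0"
  unfolding w_def by (rule proj_char(2)[OF C_ne C_closed C_convex])

lemma fejer:
  assumes p: "p \<in> S_D C F"
  shows "norm (z (Suc n) - p)^2 \<le> norm (z n - p)^2 - d n ^2 + lam n ^2 * DF n ^2"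
proof -
  have pC: "p \<in> C" using p unfolding S_D_def by auto
  have i1: "inner (z n - lam n *\<^sub>R F (z n) - w n) (p - w n) \<le> 0" by (rule w_ineq[OF pC])
  have i2: "inner (F (w n)) (w n - p) \<ge> 0" using p wC[of n] unfolding S_D_def by auto
  have l0: "lam n \<ge> 0" using lam_pos[of n] by simp
  have eq: "norm (z (Suc n) - p)^2 = norm (z n - p)^2 - d n ^2 + lam n ^2 * DF n ^2
      + 2 * inner (z n - lam n *\<^sub>R F (z n) - w n) (p - w n) - 2 * lam n * inner (F (w n)) (w n - p)"
    unfolding z_step d_def DF_def power2_norm_eq_inner
    by (simp add: inner_simps algebra_simps power2_eq_square inner_commute)
  have "lam n * inner (F (w n)) (w n - p) \<ge> 0" using l0 i2 by simp
  thus ?thesis using eq i1 by linarith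
qed

end

context algo begin

definition mild where "mild n \<longleftrightarrow> th * lam n \<le> lam (Suc n)"
definition kap where "kap = 1 - (mu / th)^2"
definition pp where "pp = (SOME p. p \<in> S_D C F)"
definition e where "e n = norm (z n - pp)^2"
definition beta where "beta n = (if mild n then 0 else lam n)"

lemma pp: "pp \<in> S_D C F" unfolding pp_def using A1 by (metis ex_in_conv someI_ex)

lemma kap: "0 < kap" "kap \<le> 1"
proof -
  have "0 < mu / th" "mu / th < 1" using th mu by auto
  hence "(mu/th)^2 < 1" "(mu/th)^2 \<ge> 0" by (auto simp: power_less_one_iff abs_less_iff)
  thus "0 < kap" "kap \<le> 1" unfolding kap_def by auto
qed

lemma DF_nonneg: "DF n \<ge> 0" unfolding DF_def by simp

lemma mild_bound: assumes "mild n" shows "lam n ^2 * DF n ^2 \<le> (mu/th)^2 * d n ^2"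
proof -
  have "th * lam n * DF n \<le> lam (Suc n) * DF n"
    using assms DF_nonneg[of n] unfolding mild_def by (intro mult_right_mono) auto
  also have "\<dots> \<le> mu * d n" by (rule lam_DF)
  finally have "lam n * DF n \<le> (mu/th) * d n" using th by (simp add: field_simps)
  moreover have "0 \<le> lam n * DF n" using lam_pos[of n] DF_nonneg[of n] by simp
  ultimately have "(lam n * DF n)^2 \<le> ((mu/th) * d n)^2" by (rule power_mono)
  thus ?thesis by (simp only: power_mult_distrib)
qed

lemma mild_fejer: assumes "mild n" shows "e (Suc n) \<le> e n - kap * d n ^2"
  using fejer[OF pp, of n] mild_bound[OF assms] unfolding e_def kap_def by (simp add: algebra_simps)

lemma beta_sum: "lam n + (1 - th) * (\<Sum>j<n. beta j) \<le> lam 0 + (\<Sum>j<n. xi j)"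
proof (induction n)
  case (Suc n)
  have "lam (Suc n) + (1 - th) * beta n \<le> lam n + xi n"
  proof (cases "mild n")
    case True thus ?thesis using lam_le_step[of n] unfolding beta_def by simp
  next
    case False
    hence "lam (Suc n) < th * lam n" unfolding mild_def by simp
    thus ?thesis using False xi_nonneg[of n] unfolding beta_def by (simp add: algebra_simps)
  qed
  thus ?case using Suc.IH by (simp add: algebra_simps)
qed simp

lemma beta_nonneg: "beta n \<ge> 0" unfolding beta_def using lam_pos[of n] by simp

lemma beta_sum_bound: "(\<Sum>j<n. beta j) \<le> Lam / (1 - th)"
proof -
  have "(1 - th) * (\<Sum>j<n. beta j) \<le> Lam"
    using beta_sum[of n] lam_pos[of n] X_ge[of n] unfolding Lam_def by linarith
  thus ?thesis using th by (simp add: field_simps)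
qed

end

context algo begin

definition BB where "BB = (SOME B. 0 \<le> B \<and> (\<forall>x y. norm (F x - F y) \<le> 1 + B * norm (x - y)))"

lemma BB: "0 \<le> BB" "norm (F x - F y) \<le> 1 + BB * norm (x - y)"
proof -
  have "0 \<le> BB \<and> (\<forall>x y. norm (F x - F y) \<le> 1 + BB * norm (x - y))"
    unfolding BB_def using uc_linear_growth[OF A3] by (rule someI_ex)
  thus "0 \<le> BB" "norm (F x - F y) \<le> 1 + BB * norm (x - y)" by auto
qed

definition rho where "rho n = norm (z n - pp)"
definition c1 where "c1 = Lam * (norm (F pp) + 1)"
definition c2 where "c2 = 2 + Lam * BB"
definition a2 where "a2 = 1 + BB * c1"
definition b2 where "b2 = BB * c2"
definition K0 where "K0 = 2 * a2^2 + 2 * b2^2"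
definition KK where "KK = Lam * K0"

lemma ppC: "pp \<in> C" using pp unfolding S_D_def by auto

lemma c_nonneg: "c1 \<ge> 0" "c2 \<ge> 0" "a2 \<ge> 0" "b2 \<ge> 0" "K0 \<ge> 0" "KK \<ge> 0"
  unfolding c1_def c2_def a2_def b2_def K0_def KK_def using Lam_pos BB(1)
  by (auto intro!: mult_nonneg_nonneg add_nonneg_nonneg)

lemma d_bound: "d n \<le> c1 + c2 * rho n"
proof -
  have nw: "norm (w n - pp) \<le> norm (z n - lam n *\<^sub>R F (z n) - pp)"
    unfolding w_def by (rule proj_nonexp_pt[OF C_ne C_closed C_convex ppC])
  have "norm (z n - lam n *\<^sub>R F (z n) - pp) \<le> rho n + norm (lam n *\<^sub>R F (z n))"
    unfolding rho_def using norm_triangle_ineq4[of "z n - pp" "lam n *\<^sub>R F (z n)"] by (simp add: algebra_simps)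
  also have "norm (lam n *\<^sub>R F (z n)) = lam n * norm (F (z n))" using lam_pos[of n] by simp
  also have "norm (F (z n)) \<le> norm (F pp) + 1 + BB * rho n"
    using BB(2)[of "z n" pp] norm_triangle_ineq2[of "F (z n)" "F pp"] unfolding rho_def by linarith
  hence "lam n * norm (F (z n)) \<le> Lam * (norm (F pp) + 1 + BB * rho n)"
    using lam_le_Lam[of n] lam_pos[of n] BB(1) by (intro mult_mono) (auto simp: rho_def)
  finally have "norm (w n - pp) \<le> rho n + Lam * (norm (F pp) + 1 + BB * rho n)" using nw by simp
  moreover have "d n \<le> rho n + norm (w n - pp)"
    unfolding d_def rho_def using norm_triangle_ineq4[of "z n - pp" "w n - pp"] by (simp add: norm_minus_commute)
  ultimately show ?thesis unfolding c1_def c2_def by (simp add: algebra_simps)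
qed

lemma DF_bound1: "DF n \<le> 1 + BB * d n" unfolding DF_def d_def by (rule BB(2))

lemma DF_bound: "DF n \<le> a2 + b2 * rho n"
proof -
  have "BB * d n \<le> BB * (c1 + c2 * rho n)" using d_bound[of n] BB(1) by (rule mult_left_mono)
  thus ?thesis using DF_bound1[of n] unfolding a2_def b2_def by (simp add: algebra_simps)
qed

lemma e_rho: "e n = rho n ^2" unfolding e_def rho_def by simp

lemma step_bound: "e (Suc n) + 1 \<le> (1 + KK * beta n) * (e n + 1)"
proof (cases "mild n")
  case True
  have "kap * d n ^2 \<ge> 0" using kap by simp
  thus ?thesis using mild_fejer[OF True] True unfolding beta_def by simp
next
  case False
  have b: "beta n = lam n" using False unfolding beta_def by simp
  have r0: "rho n \<ge> 0" unfolding rho_def by simp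
  have "DF n ^2 \<le> (a2 + b2 * rho n)^2" using DF_bound[of n] DF_nonneg[of n] by (intro power_mono) auto
  also have "\<dots> \<le> 2 * a2^2 + 2 * b2^2 * rho n ^2"
    using sum_squares_bound[of "a2" "b2 * rho n"] by (simp add: power_mult_distrib algebra_simps power2_eq_square)
  also have "\<dots> \<le> K0 * (1 + e n)" unfolding K0_def e_rho
    by (simp add: algebra_simps) 
  finally have h1: "DF n ^2 \<le> K0 * (1 + e n)" .
  have "lam n ^2 \<le> lam n * Lam" using lam_le_Lam[of n] lam_pos[of n] by (simp add: power2_eq_square)
  hence "lam n ^2 * DF n ^2 \<le> lam n * Lam * (K0 * (1 + e n))"
    using h1 lam_pos[of n] Lam_pos by (intro mult_mono) auto
  moreover have "e (Suc n) \<le> e n + lam n ^2 * DF n ^2" using fejer[OF pp, of n] zero_le_power2[of "d n"] unfolding e_def by linarith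
  ultimately have "e (Suc n) \<le> e n + KK * lam n * (1 + e n)" unfolding KK_def by (simp add: algebra_simps)
  thus ?thesis unfolding b by (simp add: algebra_simps)
qed

lemma e_nonneg: "e n \<ge> 0" unfolding e_def by simp

lemma e_bound: "e n + 1 \<le> (e 0 + 1) * exp (KK * (\<Sum>j<n. beta j))"
proof (induction n)
  case (Suc n)
  have "e (Suc n) + 1 \<le> (1 + KK * beta n) * (e n + 1)" by (rule step_bound)
  also have "\<dots> \<le> exp (KK * beta n) * ((e 0 + 1) * exp (KK * (\<Sum>j<n. beta j)))"
    using Suc.IH e_nonneg[of n] c_nonneg beta_nonneg[of n]
    by (intro mult_mono) (auto simp: exp_ge_add_one_self)
  also have "\<dots> = (e 0 + 1) * exp (KK * (\<Sum>j<Suc n. beta j))"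
    by (simp add: algebra_simps exp_add[symmetric])
  finally show ?case .
qed simp

definition Ebd where "Ebd = (e 0 + 1) * exp (KK * (Lam / (1 - th)))"

lemma e_le: "e n \<le> Ebd"
proof -
  have "KK * (\<Sum>j<n. beta j) \<le> KK * (Lam / (1 - th))"
    using beta_sum_bound[of n] c_nonneg by (intro mult_left_mono) auto
  hence "exp (KK * (\<Sum>j<n. beta j)) \<le> exp (KK * (Lam / (1 - th)))" by simp
  hence "(e 0 + 1) * exp (KK * (\<Sum>j<n. beta j)) \<le> Ebd" unfolding Ebd_def
    using e_nonneg[of 0] by (intro mult_left_mono) auto
  thus ?thesis using e_bound[of n] by linarith
qed

definition Rb where "Rb = sqrt Ebd"
definition Dbd where "Dbd = c1 + c2 * Rb"
definition Gbd where "Gbd = 1 + BB * Dbd"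

lemma rho_le: "rho n \<le> Rb"
  unfolding Rb_def using e_le[of n] e_rho[of n] by (metis real_le_rsqrt rho_def norm_ge_zero)

lemma d_le: "d n \<le> Dbd"
  using d_bound[of n] rho_le[of n] c_nonneg unfolding Dbd_def
  by (meson add_left_mono mult_left_mono order_trans)

lemma DF_le: "DF n \<le> Gbd"
  using DF_bound1[of n] d_le[of n] BB(1) unfolding Gbd_def by (meson add_left_mono mult_left_mono order_trans)

lemma z_le: "norm (z n) \<le> Rb + norm pp"
  using rho_le[of n] norm_triangle_ineq2[of "z n" pp] unfolding rho_def by linarith

lemma w_le: "norm (w n) \<le> Rb + norm pp + Dbd"
  using z_le[of n] d_le[of n] norm_triangle_ineq2[of "w n" "z n"] unfolding d_def
  by (simp add: norm_minus_commute)

end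

context algo begin

definition SX where "SX n = (\<Sum>j<n. xi j)"

lemma small_exists:
  assumes eps: "eps > 0"
  shows "\<exists>n\<ge>N. d n + d n / lam n < eps"
proof (rule ccontr)
  assume "\<not> ?thesis"
  hence H: "\<And>n. n \<ge> N \<Longrightarrow> d n + d n / lam n \<ge> eps" by (meson not_less)
  obtain \<delta> where dl0: "\<delta> > 0" and dlh: "\<And>x x'. dist x' x < \<delta> \<Longrightarrow> dist (F x') (F x) < mu * eps / 2"
    using A3 mu eps unfolding uniformly_continuous_on_def by (metis UNIV_I divide_pos_pos mult_pos_pos zero_less_numeral)
  define m where "m = min \<delta> (eps / 2)"
  have m0: "m > 0" unfolding m_def using dl0 eps by simp
  define tau where "tau = min (mu / (2 * (BB + 1))) (mu * m / 4)"
  have tau0: "tau > 0" unfolding tau_def using mu m0 BB(1) by simp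
  have dec: "lam (Suc n) \<ge> tau" if nN: "n \<ge> N" and lt: "lam (Suc n) < lam n" for n
  proof (rule ccontr)
    assume "\<not> ?thesis"
    hence lt2: "lam (Suc n) < tau" by simp
    let ?l = "lam (Suc n)"
    have eq: "?l * DF n = mu * d n" and DFp: "DF n > 0" using lam_dec[OF lt] by auto
    have lp: "?l > 0" by (rule lam_pos)
    have "?l * BB \<le> tau * BB" using lt2 BB(1) by (intro mult_right_mono) auto
    also have "tau * BB \<le> mu / (2 * (BB + 1)) * BB" unfolding tau_def using BB(1) by (intro mult_right_mono) auto
    also have "\<dots> \<le> mu / 2" using BB(1) mu by (simp add: field_simps)
    finally have lBB: "?l * BB \<le> mu / 2" .
    have "mu * d n \<le> ?l * (1 + BB * d n)" unfolding eq[symmetric] using DF_bound1[of n] lp by (intro mult_left_mono) auto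
    also have "\<dots> = ?l + (?l * BB) * d n" by (simp add: algebra_simps)
    also have "\<dots> \<le> ?l + (mu / 2) * d n" using lBB d_pos[of n] by (intro add_left_mono mult_right_mono) auto
    finally have "(mu / 2) * d n \<le> ?l" by simp
    also have "\<dots> < mu * m / 4" using lt2 unfolding tau_def by simp
    finally have "d n < m / 2" using mu by (simp add: field_simps)
    hence dsm: "d n < \<delta>" "d n < eps / 2" using m0 unfolding m_def by auto
    have "dist (F (z n)) (F (w n)) < mu * eps / 2" using dsm(1) dlh unfolding d_def dist_norm by simp
    hence DFs: "DF n < mu * eps / 2" unfolding DF_def dist_norm .
    have "d n / lam n \<le> d n / ?l" using lt lp d_pos[of n] by (intro divide_left_mono) auto
    also have "d n / ?l = DF n / mu" using eq lp mu by (simp add: field_simps)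
    also have "\<dots> < eps / 2" using DFs mu by (simp add: field_simps)
    finally have "d n / lam n < eps / 2" .
    hence "d n + d n / lam n < eps" using dsm(2) by linarith
    thus False using H[OF nN] by simp
  qed
  define tau' where "tau' = min (lam N) tau"
  have tau'0: "tau' > 0" unfolding tau'_def using tau0 lam_pos[of N] by simp
  have lam_lb: "lam n \<ge> tau'" if "n \<ge> N" for n
    using that
  proof (induction n rule: nat_induct_at_least)
    case base thus ?case unfolding tau'_def by simp
  next
    case (Suc n)
    show ?case
    proof (cases "lam (Suc n) < lam n")
      case True thus ?thesis using dec[OF Suc.hyps True] unfolding tau'_def by simp
    next
      case False thus ?thesis using Suc.IH by simp
    qed
  qed
  define K' where "K' = Lam^2 * Gbd^2"
  have K'b: "lam n ^2 * DF n ^2 \<le> K'" for n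
  proof -
    have "lam n ^2 \<le> Lam ^2" using lam_le_Lam[of n] lam_pos[of n] by (intro power_mono) auto
    moreover have "DF n ^2 \<le> Gbd ^2" using DF_le[of n] DF_nonneg[of n] by (intro power_mono) auto
    ultimately show ?thesis unfolding K'_def by (intro mult_mono) auto
  qed
  have K'0: "K' \<ge> 0" unfolding K'_def by simp
  define c where "c = K' / ((1 - th) * tau')"
  have c0: "c \<ge> 0" unfolding c_def using K'0 th tau'0 by simp
  define Psi where "Psi n = e n + c * lam n - c * SX n" for n
  have SXs: "SX (Suc n) = SX n + xi n" for n unfolding SX_def by simp
  have psi_step: "Psi (Suc n) \<le> Psi n - kap * d n ^2" if nN: "n \<ge> N" for n
  proof (cases "mild n")
    case True
    have "c * (lam (Suc n) - lam n - xi n) \<le> 0" using lam_le_step[of n] c0 by (simp add: mult_nonneg_nonpos)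
    thus ?thesis using mild_fejer[OF True] unfolding Psi_def SXs by (simp add: algebra_simps)
  next
    case False
    hence "lam (Suc n) < th * lam n" unfolding mild_def by simp
    hence "lam (Suc n) - lam n - xi n \<le> - ((1 - th) * tau')"
    proof -
      have "(1 - th) * tau' \<le> (1 - th) * lam n" using lam_lb[OF nN] th by (intro mult_left_mono) auto
      moreover have "lam (Suc n) - lam n < - ((1 - th) * lam n)" using \<open>lam (Suc n) < th * lam n\<close> by (simp add: algebra_simps)
      ultimately show ?thesis using xi_nonneg[of n] by linarith
    qed
    hence "c * (lam (Suc n) - lam n - xi n) \<le> c * (- ((1 - th) * tau'))" using mult_left_mono c0 by blast
    also have "c * (- ((1 - th) * tau')) = - K'" unfolding c_def using th tau'0 by simp
    finally have h1: "c * (lam (Suc n) - lam n - xi n) \<le> - K'" .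
    have "e (Suc n) \<le> e n - d n ^2 + K'" using fejer[OF pp, of n] K'b[of n] unfolding e_def by linarith
    moreover have "kap * d n ^2 \<le> d n ^2" using kap by (simp add: mult_left_le_one_le)
    ultimately show ?thesis using h1 unfolding Psi_def SXs by (simp add: algebra_simps)
  qed
  have psi_sum: "Psi (N + k) + kap * (\<Sum>j<k. d (N + j) ^2) \<le> Psi N" for k
  proof (induction k)
    case (Suc k)
    have "Psi (Suc (N + k)) \<le> Psi (N + k) - kap * d (N + k) ^2" by (rule psi_step) simp
    thus ?case using Suc.IH by (simp add: algebra_simps)
  qed simp
  have psi_lb: "Psi n \<ge> - (c * X)" for n
  proof -
    have "c * SX n \<le> c * X" using X_ge[of n] c0 mult_left_mono unfolding SX_def by blast
    moreover have "c * lam n \<ge> 0" using c0 lam_pos[of n] by simp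
    ultimately show ?thesis unfolding Psi_def using e_nonneg[of n] by linarith
  qed
  define gam where "gam = min (eps / 2) (tau' * eps / 2)"
  have gam0: "gam > 0" unfolding gam_def using eps tau'0 by simp
  have dge: "d n \<ge> gam" if nN: "n \<ge> N" for n
  proof (rule ccontr)
    assume "\<not> ?thesis"
    hence dl: "d n < gam" by simp
    have "d n / lam n \<le> d n / tau'" using lam_lb[OF nN] tau'0 d_pos[of n] by (intro divide_left_mono) auto
    also have "\<dots> < gam / tau'" using dl tau'0 by (simp add: divide_strict_right_mono)
    also have "\<dots> \<le> eps / 2" unfolding gam_def using tau'0 by (simp add: field_simps)
    finally have "d n / lam n < eps / 2" .
    moreover have "d n < eps / 2" using dl unfolding gam_def by simp
    ultimately have "d n + d n / lam n < eps" by linarith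
    thus False using H[OF nN] by simp
  qed
  have "kap * (real k * gam^2) \<le> Psi N + c * X" for k
  proof -
    have "(\<Sum>j<k. gam^2) \<le> (\<Sum>j<k. d (N + j) ^2)"
      using dge gam0 by (intro sum_mono power_mono) auto
    hence "kap * (real k * gam^2) \<le> kap * (\<Sum>j<k. d (N + j) ^2)" using kap by (intro mult_left_mono) auto
    thus ?thesis using psi_sum[of k] psi_lb[of "N + k"] by linarith
  qed
  moreover obtain k :: nat where kk: "real k > (Psi N + c * X) / (kap * gam^2)" using reals_Archimedean2 by blast
  moreover have "kap * gam^2 > 0" using kap gam0 by simp
  ultimately have "Psi N + c * X < real k * (kap * gam^2)" "kap * (real k * gam^2) \<le> Psi N + c * X"
    by (auto simp: pos_divide_less_eq)
  thus False by (simp add: algebra_simps)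
qed

lemma subseq_small:
  "\<exists>s. strict_mono s \<and> (\<lambda>k. d (s k)) \<longlonglongrightarrow> 0 \<and> (\<lambda>k. d (s k) / lam (s k)) \<longlonglongrightarrow> 0"
proof -
  define P where "P = (\<lambda>k n. d n + d n / lam n < 1 / (real k + 1))"
  have "\<exists>f. \<forall>k. P k (f k) \<and> f k < f (Suc k)"
  proof (rule dependent_nat_choice)
    show "\<exists>x. P 0 x" unfolding P_def using small_exists[of 1 0] by auto
  next
    fix x k assume "P k x"
    obtain n where "n \<ge> Suc x" "d n + d n / lam n < 1 / (real (Suc k) + 1)"
      using small_exists[of "1 / (real (Suc k) + 1)" "Suc x"] by auto
    thus "\<exists>y. P (Suc k) y \<and> x < y" unfolding P_def by auto
  qed
  then obtain s where sP: "\<And>k. P k (s k)" and sm: "\<And>k. s k < s (Suc k)" by blast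
  have smono: "strict_mono s" using sm by (simp add: strict_mono_Suc_iff)
  have nn: "0 \<le> d (s k)" "0 \<le> d (s k) / lam (s k)" for k using d_pos[of "s k"] lam_pos[of "s k"] by auto
  have ub: "d (s k) \<le> 1 / (real k + 1)" "d (s k) / lam (s k) \<le> 1 / (real k + 1)" for k
    using sP[of k] nn[of k] unfolding P_def by linarith+
  have "(\<lambda>k. d (s k)) \<longlonglongrightarrow> 0"
    by (rule tendsto_sandwich[of "\<lambda>_. 0" _ _ "\<lambda>k. 1 / (real k + 1)"]) (use nn ub inv_lim in auto)
  moreover have "(\<lambda>k. d (s k) / lam (s k)) \<longlonglongrightarrow> 0"
    by (rule tendsto_sandwich[of "\<lambda>_. 0" _ _ "\<lambda>k. 1 / (real k + 1)"]) (use nn ub inv_lim in auto)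
  ultimately show ?thesis using smono by blast
qed

end

context algo begin

definition Wb where "Wb = Rb + norm pp + Dbd"

lemma weak_in_C:
  assumes wc: "weak_conv W u" and WC: "\<And>k. W k \<in> C"
  shows "u \<in> C"
proof -
  define p where "p = metric_proj C u"
  have pC: "p \<in> C" unfolding p_def by (rule proj_char(1)[OF C_ne C_closed C_convex])
  have le: "inner (u - p) (W k - p) \<le> 0" for k unfolding p_def by (rule proj_char(2)[OF C_ne C_closed C_convex WC])
  have "(\<lambda>k. inner (W k) (u - p)) \<longlonglongrightarrow> inner u (u - p)" using wc unfolding weak_conv_def by blast
  hence "(\<lambda>k. inner (W k) (u - p) - inner p (u - p)) \<longlonglongrightarrow> inner u (u - p) - inner p (u - p)"
    by (rule tendsto_diff[OF _ tendsto_const])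
  moreover have "inner (W k) (u - p) - inner p (u - p) = inner (u - p) (W k - p)" for k
    by (simp add: inner_simps inner_commute)
  ultimately have "(\<lambda>k. inner (u - p) (W k - p)) \<longlonglongrightarrow> inner (u - p) (u - p)"
    by (simp add: inner_simps inner_commute)
  hence "inner (u - p) (u - p) \<le> 0" using le by (intro LIMSEQ_le_const2) auto
  hence "inner (u - p) (u - p) = 0" using inner_ge_zero[of "u - p"] by linarith
  hence "u = p" by simp
  thus ?thesis using pC by simp
qed

theorem main: "\<exists>u. weak_cluster_point z u \<and> (u \<in> S_D C F \<or> F u = 0)"
proof -
  obtain s where sm: "strict_mono s" and ds: "(\<lambda>k. d (s k)) \<longlonglongrightarrow> 0"
    and dls: "(\<lambda>k. d (s k) / lam (s k)) \<longlonglongrightarrow> 0"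
    using subseq_small by blast
  have wb: "norm ((w \<circ> s) n) \<le> Wb" for n unfolding Wb_def using w_le[of "s n"] by simp
  obtain r u where rm: "strict_mono r" and wcu: "weak_conv ((w \<circ> s) \<circ> r) u"
    using weak_seq_compact[of "w \<circ> s" Wb] wb by blast
  define t where "t = s \<circ> r"
  have tm: "strict_mono t" unfolding t_def using sm rm by (rule strict_mono_o)
  have wct: "weak_conv (w \<circ> t) u" using wcu unfolding t_def by (simp add: o_assoc)
  have dt: "(\<lambda>k. d (t k)) \<longlonglongrightarrow> 0" using LIMSEQ_subseq_LIMSEQ[OF ds rm] unfolding t_def by (simp add: o_def)
  have dlt: "(\<lambda>k. d (t k) / lam (t k)) \<longlonglongrightarrow> 0" using LIMSEQ_subseq_LIMSEQ[OF dls rm] unfolding t_def by (simp add: o_def)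
  have Wb': "norm (w (t k)) \<le> Wb" for k unfolding Wb_def using w_le[of "t k"] by simp
  have wcz: "weak_conv (z \<circ> t) u" unfolding weak_conv_def
  proof
    fix y
    have a: "(\<lambda>k. inner (w (t k)) y) \<longlonglongrightarrow> inner u y" using wct unfolding weak_conv_def by (simp add: o_def)
    have b: "(\<lambda>k. inner (z (t k) - w (t k)) y) \<longlonglongrightarrow> 0"
    proof (rule Lim_null_comparison)
      show "\<forall>\<^sub>F k in sequentially. norm (inner (z (t k) - w (t k)) y) \<le> d (t k) * norm y"
        unfolding d_def real_norm_def by (intro always_eventually allI Cauchy_Schwarz_ineq2)
      show "(\<lambda>k. d (t k) * norm y) \<longlonglongrightarrow> 0" using tendsto_mult[OF dt tendsto_const[of "norm y"]] by simp
    qed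
    have "(\<lambda>k. inner (w (t k)) y + inner (z (t k) - w (t k)) y) \<longlonglongrightarrow> inner u y + 0"
      by (rule tendsto_add[OF a b])
    thus "(\<lambda>n. inner ((z \<circ> t) n) y) \<longlonglongrightarrow> inner u y" by (simp add: inner_simps o_def)
  qed
  have clus: "weak_cluster_point z u" unfolding weak_cluster_point_def using tm wcz by blast
  have uC: "u \<in> C" using weak_in_C[OF wct] wC by (simp add: o_def)
  show ?thesis
  proof (cases "F u = 0")
    case True thus ?thesis using clus by blast
  next
    case False
    define c0 where "c0 = norm (F u) / 2"
    have c00: "c0 > 0" unfolding c0_def using False by simp
    have evF: "eventually (\<lambda>k. c0 < norm (F (w (t k)))) sequentially"
    proof -
      have "ereal c0 < ereal (norm (F u))" unfolding c0_def using False by simp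
      also have "\<dots> \<le> Liminf sequentially (\<lambda>k. ereal (norm (F ((w \<circ> t) k))))" by (rule A4[OF wct])
      finally have "eventually (\<lambda>k. ereal (norm (F ((w \<circ> t) k))) > ereal c0) sequentially"
        by (rule less_LiminfD)
      thus ?thesis by (simp add: o_def)
    qed
    have evI: "eventually (\<lambda>k. inner (F (w (t k))) (v - w (t k)) > - eta) sequentially"
      if vC: "v \<in> C" and eta: "eta > 0" for v eta
    proof -
      define Rv where "Rv = norm v + Wb"
      have Rv0: "Rv \<ge> 0" unfolding Rv_def using Wb'[of 0] norm_ge_zero[of "w (t 0)"] norm_ge_zero[of v] by linarith
      have vW: "norm (v - w (t k)) \<le> Rv" for k
        unfolding Rv_def using Wb'[of k] norm_triangle_ineq4[of v "w (t k)"] by linarith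
      define a where "a = eta / (2 * (Rv + 1))"
      have a0: "a > 0" unfolding a_def using eta Rv0 by simp
      obtain \<delta> where dl0: "\<delta> > 0" and dlh: "\<And>x x'. dist x' x < \<delta> \<Longrightarrow> dist (F x') (F x) < a"
        using A3 a0 unfolding uniformly_continuous_on_def by (metis UNIV_I)
      have e1: "eventually (\<lambda>k. d (t k) / lam (t k) < a) sequentially" using order_tendstoD(2)[OF dlt a0] .
      have e2: "eventually (\<lambda>k. d (t k) < \<delta>) sequentially" using order_tendstoD(2)[OF dt dl0] .
      show ?thesis
      proof (rule eventually_mono[OF eventually_conj[OF e1 e2]])
        fix k assume kk: "d (t k) / lam (t k) < a \<and> d (t k) < \<delta>"
        let ?n = "t k"
        have DFa: "DF ?n < a" using dlh[of "w ?n" "z ?n"] kk unfolding DF_def d_def dist_norm by (simp add: norm_minus_commute)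
        have lp: "lam ?n > 0" by (rule lam_pos)
        have pi: "inner (z ?n - lam ?n *\<^sub>R F (z ?n) - w ?n) (v - w ?n) \<le> 0" by (rule w_ineq[OF vC])
        hence "inner (z ?n - w ?n) (v - w ?n) \<le> lam ?n * inner (F (z ?n)) (v - w ?n)"
          by (simp add: inner_simps algebra_simps)
        moreover have "inner (z ?n - w ?n) (v - w ?n) \<ge> - (d ?n * Rv)"
        proof -
          have "\<bar>inner (z ?n - w ?n) (v - w ?n)\<bar> \<le> d ?n * norm (v - w ?n)" unfolding d_def by (rule Cauchy_Schwarz_ineq2)
          also have "\<dots> \<le> d ?n * Rv" using vW[of k] d_pos[of ?n] by (intro mult_left_mono) auto
          finally show ?thesis by linarith
        qed
        ultimately have "- (d ?n * Rv) \<le> lam ?n * inner (F (z ?n)) (v - w ?n)" by linarith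
        hence "- (d ?n / lam ?n * Rv) \<le> inner (F (z ?n)) (v - w ?n)" using lp by (simp add: field_simps)
        moreover have "d ?n / lam ?n * Rv \<le> a * Rv" using kk Rv0 by (intro mult_right_mono) auto
        ultimately have h1: "inner (F (z ?n)) (v - w ?n) \<ge> - (a * Rv)" by linarith
        have "\<bar>inner (F (z ?n) - F (w ?n)) (v - w ?n)\<bar> \<le> DF ?n * norm (v - w ?n)" unfolding DF_def by (rule Cauchy_Schwarz_ineq2)
        also have "\<dots> \<le> a * Rv" using DFa vW[of k] DF_nonneg[of ?n] by (intro mult_mono) auto
        finally have h2: "\<bar>inner (F (z ?n) - F (w ?n)) (v - w ?n)\<bar> \<le> a * Rv" .
        have "inner (F (w ?n)) (v - w ?n) = inner (F (z ?n)) (v - w ?n) - inner (F (z ?n) - F (w ?n)) (v - w ?n)"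
          by (simp add: inner_simps)
        hence "inner (F (w ?n)) (v - w ?n) \<ge> - (2 * a * Rv)" using h1 h2 by linarith
        moreover have "2 * a * Rv < eta" unfolding a_def using eta Rv0 by (simp add: field_simps)
        ultimately show "inner (F (w ?n)) (v - w ?n) > - eta" by linarith
      qed
    qed
    have SD: "inner (F v) (v - u) \<ge> 0" if vC: "v \<in> C" for v
    proof -
      define Rv where "Rv = norm v + Wb"
      have Rv0: "Rv \<ge> 0" unfolding Rv_def using Wb'[of 0] norm_ge_zero[of "w (t 0)"] norm_ge_zero[of v] by linarith
      have vW: "norm (v - w (t k)) \<le> Rv" for k
        unfolding Rv_def using Wb'[of k] norm_triangle_ineq4[of v "w (t k)"] by linarith
      have lim: "(\<lambda>k. inner (F v) (v - w (t k))) \<longlonglongrightarrow> inner (F v) (v - u)"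
      proof -
        have "(\<lambda>k. inner (w (t k)) (F v)) \<longlonglongrightarrow> inner u (F v)" using wct unfolding weak_conv_def by (simp add: o_def)
        hence "(\<lambda>k. inner (F v) v - inner (w (t k)) (F v)) \<longlonglongrightarrow> inner (F v) v - inner u (F v)" by (rule tendsto_diff[OF tendsto_const])
        thus ?thesis by (simp add: inner_simps inner_commute)
      qed
      have ge: "inner (F v) (v - u) \<ge> - eta" if eta: "eta > 0" for eta
      proof -
        define eta1 where "eta1 = eta / (2 * (Rv + 2))"
        have eta10: "eta1 > 0" unfolding eta1_def using eta Rv0 by simp
        obtain \<delta> where dl0: "\<delta> > 0" and dlh: "\<And>x x'. dist x' x < \<delta> \<Longrightarrow> dist (F x') (F x) < eta1"
          using A3 eta10 unfolding uniformly_continuous_on_def by (metis UNIV_I)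
        define q where "q = min (\<delta> / 2) (min 1 (eta / (2 * (norm (F v) + 1))))"
        have fv1: "2 * (norm (F v) + 1) > 0" by (smt (verit) norm_ge_zero)
        have "eta / (2 * (norm (F v) + 1)) > 0" using eta fv1 by (rule divide_pos_pos)
        hence q0: "q > 0" unfolding q_def using dl0 by simp
        have qd: "q < \<delta>" "q \<le> 1" unfolding q_def using dl0 by auto
        have ff: "norm (F v) / (norm (F v) + 1) \<le> 1" by (smt (verit) divide_le_eq_1 norm_ge_zero)
        have qF: "norm (F v) * q \<le> eta / 2"
        proof -
          have "norm (F v) * q \<le> norm (F v) * (eta / (2 * (norm (F v) + 1)))"
            unfolding q_def by (intro mult_left_mono) auto
          also have "\<dots> = eta / 2 * (norm (F v) / (norm (F v) + 1))"
            using fv1 by (simp add: field_simps)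
          also have "\<dots> \<le> eta / 2 * 1"
            using eta ff by (intro mult_left_mono) auto
          finally show ?thesis by simp
        qed
        define ep where "ep = c0 * q"
        have ep0: "ep > 0" unfolding ep_def using c00 q0 by simp
        have "eventually (\<lambda>k. inner (F v) (v - w (t k)) \<ge> - eta) sequentially"
        proof (rule eventually_mono[OF eventually_conj[OF evI[OF vC ep0] evF]])
          fix k assume kk: "inner (F (w (t k))) (v - w (t k)) > - ep \<and> c0 < norm (F (w (t k)))"
          define W where "W = w (t k)"
          define g where "g = F W"
          have gn: "norm g > c0" using kk unfolding g_def W_def by simp
          hence gn0: "norm g > 0" using c00 by linarith
          define h where "h = v + (ep / norm g ^2) *\<^sub>R g"
          have "inner g (h - W) = inner g (v - W) + ep / norm g ^2 * inner g g"
            unfolding h_def by (simp add: inner_simps algebra_simps)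
          also have "inner g g = norm g ^2" by (simp add: power2_norm_eq_inner)
          finally have "inner g (h - W) = inner g (v - W) + ep" using gn0 by simp
          hence "inner (F W) (h - W) > 0" using kk unfolding g_def W_def by simp
          hence qm: "inner (F h) (h - W) \<ge> 0" using A2 unfolding quasimonotone_def by blast
          have "norm (h - v) = ep / norm g ^2 * norm g" unfolding h_def using gn0 ep0 by simp
          also have "\<dots> = ep / norm g" using gn0 by (simp add: power2_eq_square)
          also have "\<dots> < ep / c0" using gn c00 ep0 gn0 by (intro divide_strict_left_mono) (auto intro: mult_pos_pos)
          also have "ep / c0 = q" unfolding ep_def using c00 by simp
          finally have hv: "norm (h - v) < q" .
          hence "dist h v < \<delta>" using qd by (simp add: dist_norm)
          hence Fh: "norm (F h - F v) < eta1" using dlh[of v h] by (simp add: dist_norm norm_minus_commute)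
          have hW: "norm (h - W) \<le> q + Rv"
            using hv vW[of k] norm_triangle_ineq[of "h - v" "v - W"] unfolding W_def by simp
          have id: "inner (F v) (v - W) = inner (F h) (h - W) - inner (F h - F v) (h - W) - inner (F v) (h - v)"
            by (simp add: inner_simps algebra_simps)
          have t1: "\<bar>inner (F h - F v) (h - W)\<bar> \<le> eta1 * (q + Rv)"
          proof -
            have "\<bar>inner (F h - F v) (h - W)\<bar> \<le> norm (F h - F v) * norm (h - W)" by (rule Cauchy_Schwarz_ineq2)
            also have "\<dots> \<le> eta1 * (q + Rv)" using Fh hW eta10 by (intro mult_mono) auto
            finally show ?thesis .
          qed
          have t2: "\<bar>inner (F v) (h - v)\<bar> \<le> eta / 2"
          proof -
            have "\<bar>inner (F v) (h - v)\<bar> \<le> norm (F v) * norm (h - v)" by (rule Cauchy_Schwarz_ineq2)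
            also have "\<dots> \<le> norm (F v) * q" using hv by (intro mult_left_mono) auto
            finally show ?thesis using qF by linarith
          qed
          have "eta1 * (q + Rv) \<le> eta1 * (1 + Rv)" using qd eta10 by (intro mult_left_mono) auto
          also have "\<dots> \<le> eta / 2" unfolding eta1_def using eta Rv0 by (simp add: field_simps)
          finally have t3: "eta1 * (q + Rv) \<le> eta / 2" .
          show "inner (F v) (v - w (t k)) \<ge> - eta"
            using id qm t1 t2 t3 unfolding W_def by linarith
        qed
        thus ?thesis using lim by (intro tendsto_lowerbound) auto
      qed
      show ?thesis
      proof (rule ccontr)
        assume na: "\<not> inner (F v) (v - u) \<ge> 0"
        hence "- inner (F v) (v - u) / 2 > 0" by simp
        from ge[OF this] show False using na by simp
      qed
    qed
    have "u \<in> S_D C F" unfolding S_D_def using uC SD by auto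
    thus ?thesis using clus by blast
  qed
qed

end

theorem lemma4p4:
  fixes C :: "'a::{real_inner,complete_space} set"
    and F :: "'a \<Rightarrow> 'a"
    and z w :: "nat \<Rightarrow> 'a"
    and lam xi :: "nat \<Rightarrow> real"
    and mu :: real
  assumes C_ne: "C \<noteq> {}" and C_closed: "closed C" and C_convex: "convex C"
    and A1: "S_D C F \<noteq> {}"
    and A2: "quasimonotone F"
    and A3: "uniformly_continuous_on UNIV F"
    and A4: "\<And>xs x. weak_conv xs x \<Longrightarrow>
               ereal (norm (F x)) \<le> Liminf sequentially (\<lambda>n. ereal (norm (F (xs n))))"
    and mu: "0 < mu" "mu < 1"
    and xi_nonneg: "\<And>n. xi n \<ge> 0" and xi_sum: "summable xi"
    and lam0: "lam 0 > 0"
    and w_def: "\<And>n. w n = metric_proj C (z n - lam n *\<^sub>R F (z n))"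
    and z_step: "\<And>n. z (Suc n) = w n + lam n *\<^sub>R (F (z n) - F (w n))"
    and lam_step: "\<And>n. lam (Suc n) =
          (if F (z n) \<noteq> F (w n)
           then min (mu * norm (z n - w n) / norm (F (z n) - F (w n))) (lam n + xi n)
           else lam n + xi n)"
    and z_ne_w: "\<And>n. z n \<noteq> w n"
  shows "\<exists>u. weak_cluster_point z u \<and> (u \<in> S_D C F \<or> F u = 0)"
  proof -
  interpret algo C F z w lam xi mu
    by (intro algo.intro) (use assms in auto)
  show ?thesis by (rule main)
qed

end
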